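(* Let $n\ge1$ and $\pi\in\mathcal I^C_{2n}(321)$. Then $$\mathrm{Des}^+(\pi)=\{i\in [n] : i\in E_{\pi}\text{ and } i+1\notin E_{\pi}\}.$$ (In particular $n\in\mathrm{Des}^+(\pi)$ if and only if $n\in E_\pi$.)
   Context: $[n]=\{1,\dots,n\}$. A permutation $\pi\in\mathcal S_m$ is centrosymmetric if $\pi(i)+\pi(m+1-i)=m+1$ for all $i$; $\mathcal I^C_{m}(321)$ is the set of centrosymmetric involutions in $\mathcal S_m$ avoiding $321$. A descent of $\pi$ is a position $i$ with $\pi(i)>\pi(i+1)$; for $\pi\in\mathcal S_{2n}$, $\mathrm{Des}^+(\pi)$ is the set of descents lying in $[n]$. $E_\pi=\{i\in[n]:\pi(i)>i\}$ is the set of excedances of $\pi$ lying in $[n]$. *)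

theory Defs
  imports "HOL-Combinatorics.Permutations"
begin

text \<open>Permutations of [m] = {1..m} are functions nat => nat permuting {1..m}.\<close>

definition centrosymmetric :: "nat \<Rightarrow> (nat \<Rightarrow> nat) \<Rightarrow> bool" where
  "centrosymmetric m \<pi> \<longleftrightarrow> (\<forall>i\<in>{1..m}. \<pi> i + \<pi> (m + 1 - i) = m + 1)"

definition involution :: "(nat \<Rightarrow> nat) \<Rightarrow> bool" where
  "involution \<pi> \<longleftrightarrow> (\<forall>i. \<pi> (\<pi> i) = i)"

definition avoids321 :: "nat \<Rightarrow> (nat \<Rightarrow> nat) \<Rightarrow> bool" where
  "avoids321 m \<pi> \<longleftrightarrow> \<not> (\<exists>i j k. 1 \<le> i \<and> i < j \<and> j < k \<and> k \<le> m \<and> \<pi> i > \<pi> j \<and> \<pi> j > \<pi> k)"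

definition centro_inv_321 :: "nat \<Rightarrow> (nat \<Rightarrow> nat) set" where
  "centro_inv_321 m = {\<pi>. \<pi> permutes {1..m} \<and> involution \<pi> \<and> centrosymmetric m \<pi> \<and> avoids321 m \<pi>}"

definition des_plus :: "nat \<Rightarrow> (nat \<Rightarrow> nat) \<Rightarrow> nat set" where
  "des_plus n \<pi> = {i\<in>{1..n}. \<pi> i > \<pi> (i + 1)}"

definition exc :: "nat \<Rightarrow> (nat \<Rightarrow> nat) \<Rightarrow> nat set" where
  "exc n \<pi> = {i\<in>{1..n}. \<pi> i > i}"

end

theory Submission
  imports Defs
begin

lemma pre_card:
  assumes "p permutes {1..m}" "A \<subseteq> {1..(m::nat)}"
  shows "card {k\<in>{1..m}. p k \<in> A} = card A"
proof -
  have im: "p ` {1..m} = {1..m}" using assms(1) by (simp add: permutes_image)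
  have "p ` {k\<in>{1..m}. p k \<in> A} = A"
  proof
    show "A \<subseteq> p ` {k\<in>{1..m}. p k \<in> A}"
    proof
      fix x assume "x \<in> A"
      then obtain y where "y \<in> {1..m}" "x = p y" using im assms(2) by blast
      then show "x \<in> p ` {k\<in>{1..m}. p k \<in> A}" using \<open>x \<in> A\<close> by blast
    qed
  qed blast
  moreover have "inj_on p {k\<in>{1..m}. p k \<in> A}"
    using permutes_inj[OF assms(1)] by (auto intro: inj_on_subset)
  ultimately show ?thesis by (metis card_image)
qed

lemma exc_exc:
  assumes p: "p permutes {1..m}" and av: "avoids321 m p"
    and i: "1 \<le> i" "i + 1 \<le> m" and e1: "p (i+1) > i + 1" and d: "p i > p (i+1)"
  shows False
proof -
  let ?P = "{k\<in>{1..m}. p k \<in> {1..i+1}}"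
  have c: "card ?P = i + 1" using pre_card[OF p, of "{1..i+1}"] i by simp
  have "\<not> ?P \<subseteq> {1..i-1}"
  proof
    assume "?P \<subseteq> {1..i-1}"
    then have "card ?P \<le> card {1..i-1}" by (intro card_mono) auto
    with c show False by simp
  qed
  then obtain k where k0: "k \<in> ?P" "k \<notin> {1..i-1}" by blast
  hence k: "k \<in> {1..m}" "p k \<le> i + 1" "p k \<ge> 1" "\<not> k \<le> i - 1" by auto
  have "k \<noteq> i" "k \<noteq> i+1" using k e1 d by auto
  hence "k > i + 1" using k i by auto
  moreover have "p (i+1) > p k" using k e1 by linarith
  ultimately show False using av d k i unfolding avoids321_def
    by (meson less_add_one atLeastAtMost_iff)
qed

lemma nonexc:
  assumes p: "p permutes {1..m}" and av: "avoids321 m p"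
    and i: "1 \<le> i" "i + 1 \<le> m" and e1: "p i \<le> i" and d: "p i > p (i+1)"
  shows False
proof -
  let ?P = "{k\<in>{1..m}. p k \<in> {i+1..m}}"
  have c: "card ?P = m - i" using pre_card[OF p, of "{i+1..m}"] i by simp
  have "\<not> ?P \<subseteq> {i+2..m}"
  proof
    assume "?P \<subseteq> {i+2..m}"
    then have "card ?P \<le> card {i+2..m}" by (intro card_mono) auto
    with c i show False by simp
  qed
  then obtain k where k0: "k \<in> ?P" "k \<notin> {i+2..m}" by blast
  hence k: "k \<in> {1..m}" "p k > i" "\<not> k \<ge> i + 2" by auto
  have "k \<noteq> i" "k \<noteq> i+1" using k e1 d by auto
  hence "k < i" using k by auto
  moreover have "p k > p i" using k e1 by linarith
  ultimately show False using av d k i unfolding avoids321_def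
    by (meson less_add_one atLeastAtMost_iff)
qed

theorem mainTheorem6:
  fixes n :: nat and \<pi> :: "nat \<Rightarrow> nat"
  assumes "n \<ge> 1" and "\<pi> \<in> centro_inv_321 (2 * n)"
  shows "des_plus n \<pi> = {i\<in>{1..n}. i \<in> exc n \<pi> \<and> i + 1 \<notin> exc n \<pi>}"
proof -
  have p: "\<pi> permutes {1..2*n}" and av: "avoids321 (2*n) \<pi>"
    and cs: "centrosymmetric (2*n) \<pi>"
    using assms(2) unfolding centro_inv_321_def by auto
  have inj: "inj \<pi>" using permutes_inj[OF p] .
  have cn: "\<pi> n + \<pi> (n+1) = 2*n+1"
  proof -
    have "n \<in> {1..2*n}" using assms(1) by simp
    hence "\<pi> n + \<pi> (2*n + 1 - n) = 2*n+1" using cs unfolding centrosymmetric_def by blast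
    moreover have "2*n + 1 - n = n + 1" by simp
    ultimately show ?thesis by simp
  qed
  show ?thesis
  proof (intro set_eqI iffI)
    fix i assume "i \<in> des_plus n \<pi>"
    hence i: "1 \<le> i" "i \<le> n" and d: "\<pi> i > \<pi> (i+1)" unfolding des_plus_def by auto
    show "i \<in> {i\<in>{1..n}. i \<in> exc n \<pi> \<and> i + 1 \<notin> exc n \<pi>}"
    proof (cases "i = n")
      case True
      then show ?thesis using cn d i unfolding exc_def by auto
    next
      case False
      have a: "\<pi> i > i" using nonexc[OF p av, of i] i d False by force
      have b: "\<not> \<pi> (i+1) > i+1" using exc_exc[OF p av, of i] i d False by force
      show ?thesis using a b i unfolding exc_def by auto
    qed
  next
    fix i assume "i \<in> {i\<in>{1..n}. i \<in> exc n \<pi> \<and> i + 1 \<notin> exc n \<pi>}"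
    hence i: "1 \<le> i" "i \<le> n" and a: "\<pi> i > i" and b: "i + 1 \<le> n \<longrightarrow> \<pi> (i+1) \<le> i+1"
      unfolding exc_def by auto
    show "i \<in> des_plus n \<pi>"
    proof (cases "i = n")
      case True
      then show ?thesis using cn a i unfolding des_plus_def by auto
    next
      case False
      have "\<pi> i \<noteq> \<pi> (i+1)" using inj by (metis injD n_not_Suc_n Suc_eq_plus1)
      then show ?thesis using a b i False unfolding des_plus_def by auto
    qed
  qed
qed

end
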